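(* Let $S,T$ be numberings of shape $\lambda\vdash n$, let $1\le i\le\ell(\lambda)-1$ and $1\le j\le\lambda_{i+1}$. Then \[ v_S^T=(-1)^j\sum_{U\in\Xi_{i,j}(S)}v_U^T . \]
   Context: Permutations in $\mathfrak S_n$ act on $[n]$, products are compositions $(\sigma\tau)(k)=\sigma(\tau(k))$. A numbering of shape $\lambda\vdash n$ is a filling of the Young diagram of $\lambda$ (rows indexed top to bottom; $\ell(\lambda)$ = number of rows) with $1,\dots,n$, each exactly once. For $\pi\in\mathfrak S_n$, $\pi\cdot T$ replaces each entry $k$ by $\pi(k)$; $\sigma_{T,S}$ is the unique permutation with $\sigma_{T,S}\cdot T=S$. $R(T)$, $C(T)$ are the row and column groups; $a_T=\sum_{\rho\in R(T)}\rho$, $b_T=\sum_{\zeta\in C(T)}\operatorname{sgn}(\zeta)\zeta$, and $v_S^T=\sigma_{S,T}\,b_S\,a_S\in\mathbb C[\mathfrak S_n]$. Let $J$ be the set of the first (leftmost) $j$ entries of row $i+1$ of $S$. The set $\Xi_{i,j}(S)$ consists of the numberings obtained from $S$, one for each $j$-element subset $B$ of the entries of row $i$ of $S$, by moving the entries of $J$ to the positions in row $i$ previously occupied by $B$ and the entries of $B$ to the positions in row $i+1$ previously occupied by $J$, preserving relative left-to-right order within each subset. *)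

theory Defs
  imports Complex_Main "HOL-Combinatorics.Permutations"
begin

(* Partitions: list of positive parts in weakly decreasing order, summing to n.
   lam ! (r-1) is the length of row r (rows indexed 1,...,length lam). *)
definition is_partition :: "nat list \<Rightarrow> nat \<Rightarrow> bool" where
  "is_partition lam n \<longleftrightarrow> sorted (rev lam) \<and> (\<forall>x\<in>set lam. 0 < x) \<and> sum_list lam = n"

definition cells :: "nat list \<Rightarrow> (nat \<times> nat) set" where
  "cells lam = {(r, c). 1 \<le> r \<and> r \<le> length lam \<and> 1 \<le> c \<and> c \<le> lam ! (r - 1)}"

type_synonym numbering = "nat \<times> nat \<Rightarrow> nat"

definition is_numbering :: "nat \<Rightarrow> nat list \<Rightarrow> numbering \<Rightarrow> bool" where
  "is_numbering n lam T \<longleftrightarrow> bij_betw T (cells lam) {1..n}"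

definition sigma_TS :: "nat \<Rightarrow> nat list \<Rightarrow> numbering \<Rightarrow> numbering \<Rightarrow> (nat \<Rightarrow> nat)" where
  "sigma_TS n lam T S = (THE p. p permutes {1..n} \<and> (\<forall>x\<in>cells lam. p (T x) = S x))"

definition row_group :: "nat \<Rightarrow> nat list \<Rightarrow> numbering \<Rightarrow> (nat \<Rightarrow> nat) set" where
  "row_group n lam T = {p. p permutes {1..n} \<and>
     (\<forall>x\<in>cells lam. \<exists>y\<in>cells lam. fst y = fst x \<and> T y = p (T x))}"

definition col_group :: "nat \<Rightarrow> nat list \<Rightarrow> numbering \<Rightarrow> (nat \<Rightarrow> nat) set" where
  "col_group n lam T = {p. p permutes {1..n} \<and>
     (\<forall>x\<in>cells lam. \<exists>y\<in>cells lam. snd y = snd x \<and> T y = p (T x))}"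

(* Group algebra C[S_n]: an element is a coefficient function on permutations of {1..n}
   (coefficients of non-permutations are irrelevant / zero). Product: (p q)(k) = p (q k). *)
type_synonym galg = "(nat \<Rightarrow> nat) \<Rightarrow> complex"

definition gmult :: "nat \<Rightarrow> galg \<Rightarrow> galg \<Rightarrow> galg" where
  "gmult n f g = (\<lambda>p. if p permutes {1..n}
      then (\<Sum>q\<in>{q. q permutes {1..n}}. f q * g (inv q \<circ> p)) else 0)"

definition gbasis :: "nat \<Rightarrow> (nat \<Rightarrow> nat) \<Rightarrow> galg" where
  "gbasis n p = (\<lambda>q. if q = p \<and> p permutes {1..n} then 1 else 0)"

definition a_elt :: "nat \<Rightarrow> nat list \<Rightarrow> numbering \<Rightarrow> galg" where
  "a_elt n lam T = (\<lambda>p. if p \<in> row_group n lam T then 1 else 0)"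

definition b_elt :: "nat \<Rightarrow> nat list \<Rightarrow> numbering \<Rightarrow> galg" where
  "b_elt n lam T = (\<lambda>p. if p \<in> col_group n lam T then of_int (sign p) else 0)"

definition v_elt :: "nat \<Rightarrow> nat list \<Rightarrow> numbering \<Rightarrow> numbering \<Rightarrow> galg" where
  "v_elt n lam S T = gmult n (gmult n (gbasis n (sigma_TS n lam S T)) (b_elt n lam S)) (a_elt n lam S)"

(* The numbering obtained from S by exchanging the entries at the positions
   C (a set of j columns of row i) with the entries in columns 1..j of row i+1,
   order preserving: the k-th leftmost position of C gets S(i+1,k), and
   position (i+1,k) gets the entry of the k-th leftmost position of C. *)
definition swap_numbering :: "nat \<Rightarrow> nat \<Rightarrow> nat set \<Rightarrow> numbering \<Rightarrow> numbering" where
  "swap_numbering i j C S = (\<lambda>(r, c).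
     if r = i \<and> c \<in> C then
       S (i + 1, Suc (length (filter (\<lambda>d. d < c) (sorted_list_of_set C))))
     else if r = i + 1 \<and> 1 \<le> c \<and> c \<le> j then
       S (i, sorted_list_of_set C ! (c - 1))
     else S (r, c))"

(* Xi_{i,j}(S): one numbering for each j-element subset B of the entries of row i,
   B being described by its set of column positions C. *)
definition Xi :: "nat list \<Rightarrow> nat \<Rightarrow> nat \<Rightarrow> numbering \<Rightarrow> numbering set" where
  "Xi lam i j S = (\<lambda>C. swap_numbering i j C S) `
      {C. C \<subseteq> {1..lam ! (i - 1)} \<and> card C = j}"

end

theory Submission
  imports Defs
begin


lemma bij_comp_eq_iff: "bij f \<Longrightarrow> (f \<circ> g = h) = (g = inv f \<circ> h)"
  by (metis bij_is_inj comp_assoc inv_o_cancel id_comp bij_is_surj surj_iff)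

definition stab :: "nat \<Rightarrow> (nat \<Rightarrow> 'b) \<Rightarrow> (nat \<Rightarrow> nat) set" where
  "stab n f = {p. p permutes {1..n} \<and> (\<forall>k\<in>{1..n}. f (p k) = f k)}"

lemma stab_perm: "p \<in> stab n f \<Longrightarrow> p permutes {1..n}"
  by (simp add: stab_def)

lemma stab_sub: "stab n f \<subseteq> {p. p permutes {1..n}}"
  by (auto simp: stab_def)

lemma finite_stab: "finite (stab n f)"
  by (rule finite_subset[OF stab_sub]) (simp add: finite_permutations)

lemma stab_id: "id \<in> stab n f"
  by (simp add: stab_def permutes_id)

lemma stab_comp: assumes "p \<in> stab n f" "q \<in> stab n f" shows "p \<circ> q \<in> stab n f"
proof -
  have p: "p permutes {1..n}" and q: "q permutes {1..n}" using assms by (auto simp: stab_def)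
  have "f (p (q k)) = f k" if "k \<in> {1..n}" for k
  proof -
    have "q k \<in> {1..n}" using permutes_in_image[OF q] that by blast
    then have "f (p (q k)) = f (q k)" using assms(1) by (simp only: stab_def mem_Collect_eq)
    also have "\<dots> = f k" using assms(2) that by (simp only: stab_def mem_Collect_eq)
    finally show ?thesis .
  qed
  then show ?thesis using p q by (simp add: stab_def permutes_compose)
qed

lemma stab_inv: assumes "p \<in> stab n f" shows "inv p \<in> stab n f"
proof -
  have p: "p permutes {1..n}" using assms by (simp add: stab_def)
  have "f (inv p k) = f k" if "k \<in> {1..n}" for k
  proof -
    have "inv p k \<in> {1..n}" using permutes_in_image[OF permutes_inv[OF p]] that by blast
    then have "f (p (inv p k)) = f (inv p k)" using assms by (simp only: stab_def mem_Collect_eq)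
    moreover have "p (inv p k) = k" using p by (simp add: permutes_inverses(1))
    ultimately show ?thesis by simp
  qed
  then show ?thesis using p by (simp add: stab_def permutes_inv)
qed

lemma stab_comp_right_iff:
  assumes "k \<in> stab n f"
  shows "(g \<circ> k \<in> stab n f) = (g \<in> stab n f)"
proof
  assume "g \<circ> k \<in> stab n f"
  then have "g \<circ> k \<circ> inv k \<in> stab n f" using stab_inv[OF assms] stab_comp by blast
  moreover have "g \<circ> k \<circ> inv k = g"
    using stab_perm[OF assms] by (simp add: comp_assoc permutes_inv_o(1))
  ultimately show "g \<in> stab n f" by simp
next
  assume "g \<in> stab n f" then show "g \<circ> k \<in> stab n f" using assms stab_comp by blast
qed

lemma gmult_basis:
  assumes "s permutes {1..n}"
  shows "gmult n (gbasis n s) b = (\<lambda>p. if p permutes {1..n} then b (inv s \<circ> p) else 0)"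
proof (rule ext)
  fix p
  have "(\<Sum>q\<in>{q. q permutes {1..n}}. gbasis n s q * b (inv q \<circ> p))
      = (\<Sum>q\<in>{q. q permutes {1..n}}. if q = s then b (inv q \<circ> p) else 0)"
    by (rule sum.cong) (auto simp: gbasis_def assms)
  also have "\<dots> = b (inv s \<circ> p)"
    using assms by (simp add: sum.delta' finite_permutations)
  finally show "gmult n (gbasis n s) b p = (if p permutes {1..n} then b (inv s \<circ> p) else 0)"
    by (simp add: gmult_def)
qed

lemma v_closed_gen:
  assumes sp: "s permutes {1..n}"
    and C: "C \<subseteq> {p. p permutes {1..n}}" and R: "R \<subseteq> {p. p permutes {1..n}}"
  shows "gmult n (gmult n (gbasis n s) (\<lambda>p. if p \<in> C then of_int (sign p) else 0))
             (\<lambda>p. if p \<in> R then 1 else 0) p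
       = (\<Sum>z\<in>C. if inv z \<circ> inv s \<circ> p \<in> R then of_int (sign z) else (0::complex))"
proof (cases "p permutes {1..n}")
  case True
  let ?G = "{p. p permutes {1..n}}"
  let ?b = "(\<lambda>p. if p \<in> C then of_int (sign p) else (0::complex))"
  let ?a = "(\<lambda>p. if p \<in> R then 1 else (0::complex))"
  have "gmult n (gmult n (gbasis n s) ?b) ?a p
      = (\<Sum>q\<in>?G. gmult n (gbasis n s) ?b q * ?a (inv q \<circ> p))"
    using True by (simp only: gmult_def[of n "gmult n (gbasis n s) ?b"] if_True)
  also have "\<dots> = (\<Sum>q\<in>?G. ?b (inv s \<circ> q) * ?a (inv q \<circ> p))"
    by (rule sum.cong) (simp_all only: gmult_basis[OF sp] mem_Collect_eq if_True)
  also have "\<dots> = (\<Sum>z\<in>?G. ?b (inv s \<circ> (s \<circ> z)) * ?a (inv (s \<circ> z) \<circ> p))"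
    by (rule setum_permutations_compose_left[OF sp])
  also have "\<dots> = (\<Sum>z\<in>?G. if z \<in> C then (if inv z \<circ> inv s \<circ> p \<in> R then of_int (sign z) else 0) else 0)"
  proof (rule sum.cong)
    fix z assume z: "z \<in> ?G"
    have bz: "bij z" using z permutes_bij by blast
    have bs: "bij s" using sp permutes_bij by blast
    have "inv s \<circ> (s \<circ> z) = z" using bs
      by (simp add: comp_assoc[symmetric] bij_is_inj)
    moreover have "inv (s \<circ> z) = inv z \<circ> inv s" using bz bs by (simp add: o_inv_distrib)
    ultimately show "?b (inv s \<circ> (s \<circ> z)) * ?a (inv (s \<circ> z) \<circ> p) =
      (if z \<in> C then (if inv z \<circ> inv s \<circ> p \<in> R then of_int (sign z) else 0) else 0)"
      by (simp add: comp_assoc)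
  qed simp
  also have "\<dots> = (\<Sum>z\<in>?G \<inter> C. (if inv z \<circ> inv s \<circ> p \<in> R then of_int (sign z) else 0))"
    by (rule sum.inter_restrict[symmetric]) (simp add: finite_permutations)
  also have "?G \<inter> C = C" using C by blast
  finally show ?thesis .
next
  case False
  have "(if inv z \<circ> inv s \<circ> p \<in> R then of_int (sign z) else (0::complex)) = 0" if z: "z \<in> C" for z
  proof (rule ccontr)
    assume "(if inv z \<circ> inv s \<circ> p \<in> R then of_int (sign z) else (0::complex)) \<noteq> 0"
    then have r: "inv z \<circ> inv s \<circ> p \<in> R" by (auto split: if_splits)
    have zp: "z permutes {1..n}" using z C by blast
    have "s \<circ> z \<circ> (inv z \<circ> inv s \<circ> p) = p"
      using zp sp by (simp add: comp_assoc[symmetric]) (simp add: comp_assoc permutes_inv_o)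
    moreover have "s \<circ> z \<circ> (inv z \<circ> inv s \<circ> p) permutes {1..n}"
      using permutes_compose[OF _ permutes_compose[OF zp sp]] r R by blast
    ultimately show False using False by simp
  qed
  then show ?thesis using False by (simp add: gmult_def)
qed

lemma cells_Sigma: "cells lam = Sigma {1..length lam} (\<lambda>r. {1..lam ! (r - 1)})"
  by (auto simp: cells_def)

lemma finite_cells: "finite (cells lam)"
  unfolding cells_Sigma by auto

locale numb =
  fixes n :: nat and lam :: "nat list" and S :: numbering
  assumes bij: "bij_betw S (cells lam) {1..n}"
begin

definition Si where "Si = the_inv_into (cells lam) S"

lemma S_inj: "inj_on S (cells lam)" using bij bij_betw_def by blast

lemma Si_S [simp]: "x \<in> cells lam \<Longrightarrow> Si (S x) = x"
  unfolding Si_def using S_inj by (rule the_inv_into_f_f)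

lemma S_Si [simp]: "k \<in> {1..n} \<Longrightarrow> S (Si k) = k"
  unfolding Si_def using bij by (rule f_the_inv_into_f_bij_betw)

lemma Si_in: "k \<in> {1..n} \<Longrightarrow> Si k \<in> cells lam"
  unfolding Si_def using bij by (metis bij_betw_def the_inv_into_into order_refl)

lemma S_in: "x \<in> cells lam \<Longrightarrow> S x \<in> {1..n}"
  using bij bij_betwE by blast

definition rowE where "rowE k = fst (Si k)"
definition colE where "colE k = snd (Si k)"

lemma group_eq_gen:
  "{p. p permutes {1..n} \<and> (\<forall>x\<in>cells lam. \<exists>y\<in>cells lam. g y = g x \<and> S y = p (S x))}
   = stab n (\<lambda>k. g (Si k))"
proof (intro set_eqI iffI)
  fix p assume "p \<in> {p. p permutes {1..n} \<and> (\<forall>x\<in>cells lam. \<exists>y\<in>cells lam. g y = g x \<and> S y = p (S x))}"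
  then have p: "p permutes {1..n}" and h: "\<forall>x\<in>cells lam. \<exists>y\<in>cells lam. g y = g x \<and> S y = p (S x)"
    by auto
  have "g (Si (p k)) = g (Si k)" if k: "k \<in> {1..n}" for k
  proof -
    obtain y where y: "y \<in> cells lam" "g y = g (Si k)" "S y = p (S (Si k))"
      using h Si_in[OF k] by blast
    then have "S y = p k" using k by simp
    then have "Si (p k) = y" using y(1) by (metis Si_S)
    then show ?thesis using y(2) by simp
  qed
  then show "p \<in> stab n (\<lambda>k. g (Si k))" using p by (simp add: stab_def)
next
  fix p assume "p \<in> stab n (\<lambda>k. g (Si k))"
  then have p: "p permutes {1..n}" and h: "\<forall>k\<in>{1..n}. g (Si (p k)) = g (Si k)"
    by (auto simp: stab_def)
  have "\<exists>y\<in>cells lam. g y = g x \<and> S y = p (S x)" if x: "x \<in> cells lam" for x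
  proof -
    have k: "S x \<in> {1..n}" using S_in[OF x] .
    then have pk: "p (S x) \<in> {1..n}" using permutes_in_image[OF p] by blast
    show ?thesis
      by (rule bexI[of _ "Si (p (S x))"]) (use h k pk x Si_in in auto)
  qed
  then show "p \<in> {p. p permutes {1..n} \<and> (\<forall>x\<in>cells lam. \<exists>y\<in>cells lam. g y = g x \<and> S y = p (S x))}"
    using p by blast
qed

lemma row_group_eq: "row_group n lam S = stab n rowE"
  unfolding row_group_def rowE_def using group_eq_gen[of fst] by simp

lemma col_group_eq: "col_group n lam S = stab n colE"
  unfolding col_group_def colE_def using group_eq_gen[of snd] by simp

lemma sigma_unique_aux:
  assumes "p permutes {1..n}" "q permutes {1..n}" "\<forall>x\<in>cells lam. p (S x) = q (S x)"
  shows "p = q"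
proof (rule ext)
  fix k show "p k = q k"
  proof (cases "k \<in> {1..n}")
    case True then show ?thesis using assms(3) Si_in[OF True] by (metis S_Si)
  next
    case False then show ?thesis using assms(1,2) by (simp add: permutes_not_in)
  qed
qed

lemma sigma_char:
  assumes T: "bij_betw T (cells lam) {1..n}"
  shows "sigma_TS n lam S T permutes {1..n} \<and> (\<forall>x\<in>cells lam. sigma_TS n lam S T (S x) = T x)"
proof -
  define p0 where "p0 = (\<lambda>k. if k \<in> {1..n} then T (Si k) else k)"
  have "bij_betw (T \<circ> Si) {1..n} {1..n}"
    unfolding Si_def by (rule bij_betw_trans[OF bij_betw_the_inv_into[OF bij] T])
  then have "bij_betw p0 {1..n} {1..n}"
    by (rule bij_betw_cong[THEN iffD1, rotated]) (simp add: p0_def)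
  then have p0: "p0 permutes {1..n}"
    by (rule bij_imp_permutes) (auto simp: p0_def)
  have p0S: "\<forall>x\<in>cells lam. p0 (S x) = T x" using S_in by (simp add: p0_def)
  have "sigma_TS n lam S T = p0"
    unfolding sigma_TS_def
    by (rule the_equality) (use p0 p0S sigma_unique_aux in auto)
  then show ?thesis using p0 p0S by simp
qed

lemma sigma_unique:
  assumes T: "bij_betw T (cells lam) {1..n}" and "p permutes {1..n}" "\<forall>x\<in>cells lam. p (S x) = T x"
  shows "sigma_TS n lam S T = p"
  using sigma_char[OF T] assms(2,3) sigma_unique_aux by metis

lemma v_closed:
  assumes T: "bij_betw T (cells lam) {1..n}"
  shows "v_elt n lam S T p = (\<Sum>z\<in>stab n colE.
     if inv z \<circ> inv (sigma_TS n lam S T) \<circ> p \<in> stab n rowE then of_int (sign z) else 0)"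
  unfolding v_elt_def a_elt_def b_elt_def row_group_eq col_group_eq
  by (rule v_closed_gen[OF conjunct1[OF sigma_char[OF T]] stab_sub stab_sub])

end


lemma perm_conj_iff:
  assumes w: "w permutes N"
  shows "(inv w \<circ> g \<circ> w permutes N) = (g permutes N)"
proof
  assume "g permutes N" then show "inv w \<circ> g \<circ> w permutes N"
    by (intro permutes_compose w permutes_inv)
next
  assume h: "inv w \<circ> g \<circ> w permutes N"
  have "w \<circ> (inv w \<circ> g \<circ> w) \<circ> inv w = g"
    using w by (simp add: comp_assoc permutes_inv_o) (simp add: comp_assoc[symmetric] permutes_inv_o)
  moreover have "w \<circ> (inv w \<circ> g \<circ> w) \<circ> inv w permutes N"
    by (intro permutes_compose w permutes_inv h)
  ultimately show "g permutes N" by simp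
qed

lemma stab_conj:
  assumes w: "w permutes {1..n}" and f': "\<forall>k\<in>{1..n}. f' k = f (inv w k)"
  shows "(g \<in> stab n f') = (inv w \<circ> g \<circ> w \<in> stab n f)"
proof -
  let ?N = "{1..n}"
  let ?h = "inv w \<circ> g \<circ> w"
  have wN: "\<And>m. m \<in> ?N \<Longrightarrow> w m \<in> ?N" using permutes_in_image[OF w] by blast
  have iwN: "\<And>m. m \<in> ?N \<Longrightarrow> inv w m \<in> ?N" using permutes_in_image[OF permutes_inv[OF w]] by blast
  have ipp: "\<And>m. inv w (w m) = m" using permutes_inverses(2)[OF w] .
  have pip: "\<And>m. w (inv w m) = m" using permutes_inverses(1)[OF w] .
  show ?thesis
  proof (cases "g permutes ?N")
    case False then show ?thesis using perm_conj_iff[OF w] stab_perm by blast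
  next
    case True
    have gN: "\<And>m. m \<in> ?N \<Longrightarrow> g m \<in> ?N" using permutes_in_image[OF True] by blast
    have "(\<forall>k\<in>?N. f' (g k) = f' k) = (\<forall>m\<in>?N. f (?h m) = f m)"
    proof
      assume A: "\<forall>k\<in>?N. f' (g k) = f' k"
      show "\<forall>m\<in>?N. f (?h m) = f m"
      proof
        fix m assume m: "m \<in> ?N"
        have "f (?h m) = f' (g (w m))" using f' gN wN m by simp
        also have "\<dots> = f' (w m)" using A wN m by blast
        also have "\<dots> = f m" using f' wN m ipp by simp
        finally show "f (?h m) = f m" .
      qed
    next
      assume A: "\<forall>m\<in>?N. f (?h m) = f m"
      show "\<forall>k\<in>?N. f' (g k) = f' k"
      proof
        fix k assume k: "k \<in> ?N"
        have "f' (g k) = f (?h (inv w k))" using f' gN k pip by simp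
        also have "\<dots> = f (inv w k)" using A iwN k by blast
        also have "\<dots> = f' k" using f' k by simp
        finally show "f' (g k) = f' k" .
      qed
    qed
    then show ?thesis using True perm_conj_iff[OF w] by (simp add: stab_def)
  qed
qed

lemma sign_conj:
  fixes n :: nat
  assumes w: "w permutes {1..n}" and z: "z permutes {1..n}"
  shows "sign (inv w \<circ> z \<circ> w) = sign z"
proof -
  have pp1: "permutation w" by (rule permutes_imp_permutation[OF _ w]) simp
  have pp2: "permutation z" by (rule permutes_imp_permutation[OF _ z]) simp
  have pp3: "permutation (inv w)" by (rule permutes_imp_permutation[OF _ permutes_inv[OF w]]) simp
  note pp = pp1 pp2 pp3
  have "sign (inv w \<circ> z \<circ> w) = sign (inv w) * sign z * sign w"
    using pp by (simp add: sign_compose permutation_compose)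
  also have "\<dots> = sign z" using pp by (simp add: sign_inverse)
  finally show ?thesis .
qed

lemma v_conj:
  assumes S: "numb n lam S" and T: "bij_betw T (cells lam) {1..n}"
    and w: "w permutes {1..n}" and U: "\<forall>x\<in>cells lam. U x = w (S x)"
  shows "v_elt n lam U T p = v_elt n lam S T (p \<circ> w)"
proof -
  interpret S: numb n lam S by (rule S)
  have "bij_betw (w \<circ> S) (cells lam) {1..n}"
    by (rule bij_betw_trans[OF S.bij permutes_imp_bij[OF w]])
  then have Ub: "bij_betw U (cells lam) {1..n}"
    by (rule bij_betw_cong[THEN iffD1, rotated]) (use U in simp)
  interpret U: numb n lam U by (rule numb.intro[OF Ub])
  have pip: "\<And>m. w (inv w m) = m" using permutes_inverses(1)[OF w] .
  have ipp: "\<And>m. inv w (w m) = m" using permutes_inverses(2)[OF w] .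
  have iwN: "\<And>m. m \<in> {1..n} \<Longrightarrow> inv w m \<in> {1..n}" using permutes_in_image[OF permutes_inv[OF w]] by blast
  have USi: "U.Si k = S.Si (inv w k)" if k: "k \<in> {1..n}" for k
  proof -
    have c: "S.Si (inv w k) \<in> cells lam" using S.Si_in iwN k by blast
    have "U (S.Si (inv w k)) = k" using U c S.S_Si iwN k pip by simp
    then show ?thesis using U.Si_S[OF c] by simp
  qed
  have Urow: "\<forall>k\<in>{1..n}. U.rowE k = S.rowE (inv w k)" using USi by (simp add: U.rowE_def S.rowE_def)
  have Ucol: "\<forall>k\<in>{1..n}. U.colE k = S.colE (inv w k)" using USi by (simp add: U.colE_def S.colE_def)
  define sg where "sg = sigma_TS n lam S T"
  have sg: "sg permutes {1..n}" "\<forall>x\<in>cells lam. sg (S x) = T x" using S.sigma_char[OF T] sg_def by auto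
  have sgU: "sigma_TS n lam U T = sg \<circ> inv w"
    by (rule U.sigma_unique[OF T]) (use sg permutes_compose[OF permutes_inv[OF w] sg(1)] U ipp in auto)
  have bpi: "bij w" "bij (inv w)" "bij sg" using w sg(1) permutes_bij permutes_inv by blast+
  have "v_elt n lam U T p = (\<Sum>z\<in>stab n U.colE.
     if inv z \<circ> inv (sg \<circ> inv w) \<circ> p \<in> stab n U.rowE then of_int (sign z) else 0)"
    using U.v_closed[OF T] sgU by simp
  also have "\<dots> = (\<Sum>z\<in>stab n S.colE.
     if inv z \<circ> inv sg \<circ> (p \<circ> w) \<in> stab n S.rowE then of_int (sign z) else 0)"
  proof (rule sum.reindex_bij_witness[of _ "\<lambda>z. w \<circ> z \<circ> inv w" "\<lambda>z. inv w \<circ> z \<circ> w"])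
    fix a assume a: "a \<in> stab n U.colE"
    show "w \<circ> (inv w \<circ> a \<circ> w) \<circ> inv w = a"
      using w by (simp add: comp_assoc permutes_inv_o) (simp add: comp_assoc[symmetric] permutes_inv_o)
    show "inv w \<circ> a \<circ> w \<in> stab n S.colE" using a stab_conj[OF w Ucol] by blast
    have ap: "a permutes {1..n}" using a stab_perm by blast
    have ba: "bij a" using ap permutes_bij by blast
    have inv1: "inv (inv w \<circ> a \<circ> w) = inv w \<circ> inv a \<circ> w"
      using bpi ba by (simp add: o_inv_distrib bij_comp inv_inv_eq comp_assoc)
    have inv2: "inv (sg \<circ> inv w) = w \<circ> inv sg"
      using bpi by (simp add: o_inv_distrib inv_inv_eq)
    have "(inv a \<circ> inv (sg \<circ> inv w) \<circ> p \<in> stab n U.rowE)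
        = (inv w \<circ> (inv a \<circ> inv (sg \<circ> inv w) \<circ> p) \<circ> w \<in> stab n S.rowE)"
      by (rule stab_conj[OF w Urow])
    also have "inv w \<circ> (inv a \<circ> inv (sg \<circ> inv w) \<circ> p) \<circ> w
        = inv (inv w \<circ> a \<circ> w) \<circ> inv sg \<circ> (p \<circ> w)"
      by (simp only: inv1 inv2) (simp add: comp_assoc)
    finally have e: "(inv a \<circ> inv (sg \<circ> inv w) \<circ> p \<in> stab n U.rowE) = (inv (inv w \<circ> a \<circ> w) \<circ> inv sg \<circ> (p \<circ> w) \<in> stab n S.rowE)" .
    show "(if inv (inv w \<circ> a \<circ> w) \<circ> inv sg \<circ> (p \<circ> w) \<in> stab n S.rowE
          then of_int (sign (inv w \<circ> a \<circ> w)) else 0) =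
        (if inv a \<circ> inv (sg \<circ> inv w) \<circ> p \<in> stab n U.rowE then of_int (sign a) else (0::complex))"
      by (simp only: e sign_conj[OF w ap])
  next
    fix b assume b: "b \<in> stab n S.colE"
    show "inv w \<circ> (w \<circ> b \<circ> inv w) \<circ> w = b"
      using w by (simp add: comp_assoc permutes_inv_o) (simp add: comp_assoc[symmetric] permutes_inv_o)
    have "inv w \<circ> (w \<circ> b \<circ> inv w) \<circ> w \<in> stab n S.colE"
      using b w by (simp add: comp_assoc permutes_inv_o) (simp add: comp_assoc[symmetric] permutes_inv_o)
    then show "w \<circ> b \<circ> inv w \<in> stab n U.colE" using stab_conj[OF w Ucol] by blast
  qed
  also have "\<dots> = v_elt n lam S T (p \<circ> w)" unfolding sg_def by (rule S.v_closed[OF T, symmetric])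
  finally show ?thesis .
qed


lemma sum_stab_compose_right:
  assumes q: "q \<in> stab n f"
  shows "sum g (stab n f) = sum (\<lambda>p. g (p \<circ> q)) (stab n f)"
proof (rule sum.reindex_bij_witness[where i="\<lambda>p. p \<circ> q" and j="\<lambda>p. p \<circ> inv q"])
  have qp: "q permutes {1..n}" using q stab_perm by blast
  fix a assume a: "a \<in> stab n f"
  show "a \<circ> inv q \<circ> q = a" using qp by (simp add: comp_assoc permutes_inv_o)
  show "a \<circ> inv q \<in> stab n f" using a stab_inv[OF q] stab_comp by blast
  show "g (a \<circ> inv q \<circ> q) = g a" using qp by (simp add: comp_assoc permutes_inv_o)
next
  have qp: "q permutes {1..n}" using q stab_perm by blast
  fix b assume b: "b \<in> stab n f"
  show "b \<circ> q \<circ> inv q = b" using qp by (simp add: comp_assoc permutes_inv_o)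
  show "b \<circ> q \<in> stab n f" using b q stab_comp by blast
qed

lemma sorted_rev_le:
  assumes "sorted (rev xs)" "a \<le> b" "b < length xs" shows "xs ! b \<le> xs ! a"
  using sorted_rev_nth_mono assms by blast


lemma alt_sum_Pow:
  assumes "finite K" "K \<noteq> {}"
  shows "(\<Sum>X\<in>Pow K. (-1::complex) ^ card X) = 0"
proof -
  have "(\<Prod>x\<in>K. (1::complex) - 1) = (\<Sum>X\<in>Pow K. (-1) ^ card X * (\<Prod>x\<in>X. 1) * (\<Prod>x\<in>K-X. 1))"
    by (rule prod_diff_conv_sum[OF assms(1)])
  moreover have "card K > 0" using assms card_gt_0_iff by blast
  ultimately show ?thesis by (simp add: power_0_left)
qed

lemma incl_excl:
  fixes F :: "'a set \<Rightarrow> complex"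
  assumes fin: "finite J" and H: "\<And>J'. J' \<subseteq> J \<Longrightarrow> J' \<noteq> {} \<Longrightarrow> (\<Sum>K\<in>Pow J'. F K) = 0"
  shows "F J = (-1) ^ card J * F {}"
proof -
  have "J' \<subseteq> J \<longrightarrow> F J' = (-1) ^ card J' * F {}" if "finite J'" for J'
    using that
  proof (induction J' rule: finite_psubset_induct)
    case (psubset J')
    show ?case
    proof (cases "J' = {}")
      case True then show ?thesis by simp
    next
      case False
      show ?thesis
      proof
        assume sub: "J' \<subseteq> J"
        have fP: "finite (Pow J')" using psubset.hyps by simp
        have "0 = (\<Sum>K\<in>Pow J'. F K)" using H[OF sub False] by simp
        also have "\<dots> = F J' + (\<Sum>K\<in>Pow J' - {J'}. F K)"
          using fP by (simp add: sum.remove[of _ J'])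
        also have "(\<Sum>K\<in>Pow J' - {J'}. F K) = (\<Sum>K\<in>Pow J' - {J'}. (-1) ^ card K * F {})"
        proof (rule sum.cong[OF refl])
          fix K assume "K \<in> Pow J' - {J'}"
          then have "K \<subset> J'" by auto
          then show "F K = (-1) ^ card K * F {}" using psubset.IH sub by blast
        qed
        also have "\<dots> = (\<Sum>K\<in>Pow J' - {J'}. (-1) ^ card K) * F {}"
          by (simp add: sum_distrib_right)
        also have "(\<Sum>K\<in>Pow J' - {J'}. (-1::complex) ^ card K) = - ((-1) ^ card J')"
        proof -
          have "0 = (\<Sum>K\<in>Pow J'. (-1::complex) ^ card K)"
            using alt_sum_Pow[OF psubset.hyps False] by simp
          also have "\<dots> = (-1) ^ card J' + (\<Sum>K\<in>Pow J' - {J'}. (-1::complex) ^ card K)"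
            using fP by (simp add: sum.remove[of _ J'])
          finally show ?thesis by (simp add: eq_neg_iff_add_eq_0 add.commute)
        qed
        finally show "F J' = (-1) ^ card J' * F {}" by (simp add: eq_neg_iff_add_eq_0)
      qed
    qed
  qed
  then show ?thesis using fin by blast
qed

lemma swap_exists:
  assumes "finite B"
  shows "finite K \<Longrightarrow> B \<inter> K = {} \<Longrightarrow> card B = card K \<Longrightarrow> \<exists>w. w permutes (B \<union> K) \<and> w ` B = K"
  using assms
proof (induction B arbitrary: K rule: finite_induct)
  case empty
  then have "K = {}" by simp
  then show ?case by (intro exI[of _ id]) (simp add: id_def)
next
  case (insert b B K)
  then have "K \<noteq> {}" by auto
  then obtain k0 where k0: "k0 \<in> K" by blast
  have bK: "b \<notin> K" using insert.prems by auto
  have "finite (K - {k0})" "B \<inter> (K - {k0}) = {}" "card B = card (K - {k0})"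
    using insert k0 by auto
  then obtain w0 where w0: "w0 permutes (B \<union> (K - {k0}))" "w0 ` B = K - {k0}"
    using insert.IH by blast
  define w where "w = Transposition.transpose b k0 \<circ> w0"
  have "w0 permutes (insert b B \<union> K)" using w0(1) by (rule permutes_subset) auto
  moreover have "Transposition.transpose b k0 permutes (insert b B \<union> K)"
    using k0 by (intro permutes_swap_id) auto
  ultimately have wp: "w permutes (insert b B \<union> K)" unfolding w_def by (rule permutes_compose)
  have "w0 b = b" by (rule permutes_not_in[OF w0(1)]) (use insert.hyps bK in auto)
  then have wb: "w b = k0" by (simp add: w_def)
  have "w ` B = Transposition.transpose b k0 ` (K - {k0})" unfolding w_def image_comp[symmetric] w0(2) ..
  also have "\<dots> = K - {k0}"
  proof -
    have "Transposition.transpose b k0 x = x" if "x \<in> K - {k0}" for x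
      using that bK by (auto simp: transpose_def)
    then show ?thesis by (metis image_cong image_ident)
  qed
  finally have "w ` insert b B = K" using wb k0 by auto
  then show ?case using wp by blast
qed

locale garnir = numb +
  fixes T :: numbering and i j :: nat
  assumes T: "bij_betw T (cells lam) {1..n}"
    and part: "is_partition lam n"
    and i1: "1 \<le> i" and i2: "i \<le> length lam - 1"
    and j1: "1 \<le> j" and j2: "j \<le> lam ! i"
begin

definition "V p = v_elt n lam S T p"
definition "sg = sigma_TS n lam S T"
definition "A = {k \<in> {1..n}. rowE k = i}"
definition "B2 = {k \<in> {1..n}. rowE k = Suc i}"

lemma sg: "sg permutes {1..n}" "\<forall>x\<in>cells lam. sg (S x) = T x"
  using sigma_char[OF T] sg_def by auto

lemma V_closed: "V q = (\<Sum>z\<in>stab n colE.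
     if inv z \<circ> inv sg \<circ> q \<in> stab n rowE then of_int (sign z) else 0)"
  unfolding V_def sg_def by (rule v_closed[OF T])

lemma V_right_inv:
  assumes k: "k \<in> stab n rowE" shows "V (q \<circ> k) = V q"
  unfolding V_closed
proof (rule sum.cong[OF refl])
  fix z :: "nat \<Rightarrow> nat"
  have "inv z \<circ> inv sg \<circ> (q \<circ> k) = (inv z \<circ> inv sg \<circ> q) \<circ> k" by (simp add: comp_assoc)
  then show "(if inv z \<circ> inv sg \<circ> (q \<circ> k) \<in> stab n rowE then of_int (sign z) else (0::complex)) =
    (if inv z \<circ> inv sg \<circ> q \<in> stab n rowE then of_int (sign z) else 0)"
    using stab_comp_right_iff[OF k] by simp
qed

lemma V_double: "V q = (\<Sum>r\<in>stab n rowE. \<Sum>z\<in>stab n colE.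
     if sg \<circ> z \<circ> r = q then of_int (sign z) else 0)"
proof -
  have "V q = (\<Sum>z\<in>stab n colE. \<Sum>r\<in>stab n rowE.
     if sg \<circ> z \<circ> r = q then of_int (sign z) else 0)"
    unfolding V_closed
  proof (rule sum.cong[OF refl])
    fix z assume z: "z \<in> stab n colE"
    have bz: "bij (sg \<circ> z)" using z sg(1) stab_perm permutes_bij bij_comp by blast
    have iz: "inv (sg \<circ> z) = inv z \<circ> inv sg"
      using z sg(1) stab_perm permutes_bij by (metis o_inv_distrib)
    have "(\<Sum>r\<in>stab n rowE. if sg \<circ> z \<circ> r = q then of_int (sign z) else (0::complex))
        = (\<Sum>r\<in>stab n rowE. if r = inv z \<circ> inv sg \<circ> q then of_int (sign z) else 0)"
    proof (rule sum.cong[OF refl])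
      fix r
      have "(sg \<circ> z \<circ> r = q) = (r = inv z \<circ> inv sg \<circ> q)"
        by (simp only: bij_comp_eq_iff[OF bz] iz)
      then show "(if sg \<circ> z \<circ> r = q then of_int (sign z) else (0::complex)) =
        (if r = inv z \<circ> inv sg \<circ> q then of_int (sign z) else 0)" by simp
    qed
    also have "\<dots> = (if inv z \<circ> inv sg \<circ> q \<in> stab n rowE then of_int (sign z) else 0)"
      by (simp add: sum.delta' finite_stab)
    finally show "(if inv z \<circ> inv sg \<circ> q \<in> stab n rowE then of_int (sign z) else 0) =
      (\<Sum>r\<in>stab n rowE. if sg \<circ> z \<circ> r = q then of_int (sign z) else (0::complex))" by simp
  qed
  also have "\<dots> = (\<Sum>r\<in>stab n rowE. \<Sum>z\<in>stab n colE.
     if sg \<circ> z \<circ> r = q then of_int (sign z) else 0)"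
    by (rule sum.swap)
  finally show ?thesis .
qed

lemma lam_mono: "lam ! i \<le> lam ! (i - 1)"
  using part i1 i2 unfolding is_partition_def by (intro sorted_rev_le) auto

lemma shape_col:
  assumes r: "r \<in> stab n rowE" and y: "y \<in> B2"
  shows "\<exists>x\<in>A. colE (r x) = colE (r y)"
proof -
  have rp: "r permutes {1..n}" using r stab_perm by blast
  have yN: "y \<in> {1..n}" using y B2_def by auto
  have ryN: "r y \<in> {1..n}" using permutes_in_image[OF rp] yN by blast
  have rowy: "rowE (r y) = Suc i" using r yN y by (simp add: stab_def B2_def)
  define c where "c = colE (r y)"
  have cell: "Si (r y) \<in> cells lam" using Si_in[OF ryN] .
  have Si_eq: "Si (r y) = (Suc i, c)" using rowy c_def by (simp add: rowE_def colE_def prod_eq_iff)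
  have c1: "1 \<le> c" and c2: "c \<le> lam ! i" using cell Si_eq by (auto simp: cells_def)
  have icell: "(i, c) \<in> cells lam" using c1 c2 lam_mono i1 i2 by (auto simp: cells_def)
  define a where "a = S (i, c)"
  have aN: "a \<in> {1..n}" using S_in[OF icell] a_def by simp
  have Sia: "Si a = (i, c)" using Si_S[OF icell] a_def by simp
  define x where "x = inv r a"
  have xN: "x \<in> {1..n}" using permutes_in_image[OF permutes_inv[OF rp]] aN x_def by blast
  have rx: "r x = a" using x_def permutes_inverses(1)[OF rp] by simp
  have "rowE x = rowE (r x)" using r xN by (simp add: stab_def)
  also have "\<dots> = i" using rx Sia by (simp add: rowE_def)
  finally have "x \<in> A" using xN by (simp add: A_def)
  moreover have "colE (r x) = colE (r y)" using rx Sia c_def by (simp add: colE_def)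
  ultimately show ?thesis by blast
qed

lemma garnir_vanish:
  assumes J'B: "J' \<subseteq> B2" and J'ne: "J' \<noteq> {}"
  shows "(\<Sum>w\<in>{w. w permutes (A \<union> J')}. V (p \<circ> w)) = 0"
proof -
  let ?P = "{w. w permutes (A \<union> J')}"
  let ?R = "stab n rowE" and ?C = "stab n colE"
  define f where "f = (\<lambda>r z (w::nat\<Rightarrow>nat). if sg \<circ> z \<circ> r = p \<circ> w then of_int (sign z) else (0::complex))"
  have "(\<Sum>w\<in>?P. V (p \<circ> w)) = (\<Sum>w\<in>?P. \<Sum>r\<in>?R. \<Sum>z\<in>?C. f r z w)"
    unfolding V_double f_def ..
  also have "\<dots> = (\<Sum>r\<in>?R. \<Sum>w\<in>?P. \<Sum>z\<in>?C. f r z w)" by (rule sum.swap)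
  also have "\<dots> = (\<Sum>r\<in>?R. \<Sum>z\<in>?C. \<Sum>w\<in>?P. f r z w)" by (simp only: sum.swap[of _ ?P])
  also have "\<dots> = (\<Sum>r\<in>?R. 0)"
  proof (rule sum.cong[OF refl])
    fix r assume r: "r \<in> ?R"
    have rp: "r permutes {1..n}" using r stab_perm by blast
    have br: "bij r" using rp permutes_bij by blast
    obtain y where y: "y \<in> J'" using J'ne by blast
    have yB: "y \<in> B2" using y J'B by blast
    obtain x where x: "x \<in> A" and cx: "colE (r x) = colE (r y)" using shape_col[OF r yB] by blast
    have xN: "x \<in> {1..n}" and yN: "y \<in> {1..n}" using x yB by (auto simp: A_def B2_def)
    have "x \<noteq> y" using x yB by (auto simp: A_def B2_def)
    then have rxy: "r x \<noteq> r y" using permutes_inj[OF rp] by (meson injD)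
    have rxN: "r x \<in> {1..n}" and ryN: "r y \<in> {1..n}" using permutes_in_image[OF rp] xN yN by blast+
    define t where "t = Transposition.transpose x y"
    define t' where "t' = Transposition.transpose (r x) (r y)"
    have tP: "t permutes (A \<union> J')" unfolding t_def using x y by (intro permutes_swap_id) auto
    have t'p: "t' permutes {1..n}" unfolding t'_def using rxN ryN by (intro permutes_swap_id)
    have t'C: "t' \<in> ?C"
    proof -
      have "colE (t' k) = colE k" for k
        unfolding t'_def using cx by (cases "k = r x"; cases "k = r y") auto
      then show ?thesis using t'p by (simp add: stab_def)
    qed
    have rt: "t' \<circ> r = r \<circ> t"
      unfolding t'_def t_def using transpose_comp_eq[OF br, of "r x" "r y"] br
      by (simp add: bij_is_inj)
    have st': "sign t' = -1" unfolding t'_def using rxy by (simp add: sign_swap_id)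
    have pt': "permutation t'" by (rule permutes_imp_permutation[OF _ t'p]) simp
    have tt: "t \<circ> t = id" unfolding t_def by simp
    have key: "f r (z \<circ> t') (w \<circ> t) = - f r z w" if z: "z \<in> ?C" for z w
    proof -
      have pz: "permutation z" using z stab_perm permutes_imp_permutation by blast
      have e1: "sg \<circ> (z \<circ> t') \<circ> r = (sg \<circ> z \<circ> r) \<circ> t" using rt by (simp add: comp_assoc)
      have e2: "((sg \<circ> z \<circ> r) \<circ> t = p \<circ> (w \<circ> t)) = (sg \<circ> z \<circ> r = p \<circ> w)"
      proof
        assume "(sg \<circ> z \<circ> r) \<circ> t = p \<circ> (w \<circ> t)"
        then have "(sg \<circ> z \<circ> r) \<circ> t \<circ> t = p \<circ> w \<circ> t \<circ> t" by (simp add: comp_assoc)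
        then show "sg \<circ> z \<circ> r = p \<circ> w" by (simp add: comp_assoc tt)
      qed (simp add: comp_assoc)
      have "sign (z \<circ> t') = - sign z" using pz pt' st' by (simp add: sign_compose)
      then show ?thesis unfolding f_def using e1 e2 by simp
    qed
    let ?Q = "\<Sum>z\<in>?C. \<Sum>w\<in>?P. f r z w"
    have "?Q = (\<Sum>z\<in>?C. \<Sum>w\<in>?P. f r (z \<circ> t') w)"
      by (rule sum_stab_compose_right[OF t'C])
    also have "\<dots> = (\<Sum>z\<in>?C. \<Sum>w\<in>?P. f r (z \<circ> t') (w \<circ> t))"
      by (rule sum.cong[OF refl], rule sum_permutations_compose_right[OF tP])
    also have "\<dots> = (\<Sum>z\<in>?C. \<Sum>w\<in>?P. - f r z w)"
      using key by simp
    also have "\<dots> = - ?Q" by (simp add: sum_negf)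
    finally show "?Q = 0" by simp
  qed
  also have "\<dots> = 0" by simp
  finally show ?thesis .
qed


definition "J = S ` ({Suc i} \<times> {1..j})"
definition "X = A \<union> J"

lemma len: "Suc i \<le> length lam" using i1 i2 by simp

lemma J_cells: "{Suc i} \<times> {1..j} \<subseteq> cells lam"
  using len j2 by (auto simp: cells_def)

lemma J_B2: "J \<subseteq> B2"
proof
  fix k assume "k \<in> J"
  then obtain c where c: "(Suc i, c) \<in> {Suc i} \<times> {1..j}" and k: "k = S (Suc i, c)"
    by (auto simp: J_def)
  have cc: "(Suc i, c) \<in> cells lam" using c J_cells by blast
  show "k \<in> B2" using S_in[OF cc] Si_S[OF cc] k by (simp add: B2_def rowE_def)
qed

lemma A_B2: "A \<inter> B2 = {}" by (auto simp: A_def B2_def)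

lemma A_N: "A \<subseteq> {1..n}" by (auto simp: A_def)
lemma B2_N: "B2 \<subseteq> {1..n}" by (auto simp: B2_def)
lemma X_N: "X \<subseteq> {1..n}" using A_N B2_N J_B2 by (auto simp: X_def)
lemma finite_A: "finite A" using A_N finite_subset by blast
lemma finite_J: "finite J" by (simp add: J_def)
lemma card_J: "card J = j"
proof -
  have "inj_on S ({Suc i} \<times> {1..j})" using S_inj J_cells inj_on_subset by blast
  then show ?thesis by (simp add: J_def card_image card_cartesian_product)
qed

lemma V_perm_inv:
  assumes t1: "t1 permutes X" and t2: "t2 permutes X" and eq: "t1 ` A = t2 ` A"
  shows "V (p \<circ> t1) = V (p \<circ> t2)"
proof -
  define k where "k = inv t1 \<circ> t2"
  have kX: "k permutes X" unfolding k_def by (intro permutes_compose t2 permutes_inv t1)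
  have kN: "k permutes {1..n}" using permutes_subset[OF kX X_N] .
  have t2k: "t2 = t1 \<circ> k" unfolding k_def using t1 by (simp add: comp_assoc[symmetric] permutes_inv_o)
  have "rowE (k m) = rowE m" if m: "m \<in> {1..n}" for m
  proof (cases "m \<in> X")
    case False then show ?thesis using kX by (simp add: permutes_not_in)
  next
    case True
    show ?thesis
    proof (cases "m \<in> A")
      case True
      then obtain a where a: "a \<in> A" "t2 m = t1 a" using eq by (metis imageE imageI)
      have "k m = a" unfolding k_def using a permutes_inverses(2)[OF t1] by simp
      then show ?thesis using a True by (simp add: A_def)
    next
      case False
      then have mJ: "m \<in> J" using True X_def by blast
      have kmX: "k m \<in> X" using permutes_in_image[OF kX] True by blast
      have "k m \<notin> A"
      proof
        assume "k m \<in> A"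
        then have "t2 m \<in> t2 ` A" using t2k eq by (metis comp_apply imageI)
        then show False using False permutes_inj[OF t2] by (auto dest: injD)
      qed
      then have "k m \<in> J" using kmX X_def by blast
      then have "k m \<in> B2" "m \<in> B2" using mJ J_B2 by blast+
      then show ?thesis by (simp add: B2_def)
    qed
  qed
  then have "k \<in> stab n rowE" using kN by (simp add: stab_def)
  then have "V (p \<circ> t1 \<circ> k) = V (p \<circ> t1)" by (rule V_right_inv)
  then show ?thesis using t2k by (simp add: comp_assoc)
qed

definition "Phi p D = V (p \<circ> (SOME t. t permutes X \<and> t ` A = D))"

lemma Phi_eq: assumes t: "t permutes X" shows "Phi p (t ` A) = V (p \<circ> t)"
proof -
  have ex: "\<exists>t'. t' permutes X \<and> t' ` A = t ` A" using t by blast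
  define t' where "t' = (SOME t'. t' permutes X \<and> t' ` A = t ` A)"
  have "t' permutes X \<and> t' ` A = t ` A" unfolding t'_def using someI_ex[OF ex] .
  then show ?thesis unfolding Phi_def t'_def[symmetric] using V_perm_inv t by metis
qed

end




context garnir begin

lemma A_J'_disj: "J' \<subseteq> J \<Longrightarrow> A \<inter> J' = {}" using A_B2 J_B2 by blast

lemma group_vanish:
  assumes J'J: "J' \<subseteq> J" and ne: "J' \<noteq> {}"
  shows "sum (Phi p) ((\<lambda>w. w ` A) ` {w. w permutes (A \<union> J')}) = 0"
proof -
  let ?P = "{w. w permutes (A \<union> J')}"
  let ?img = "(\<lambda>w. w ` A) ` ?P"
  have finAJ: "finite (A \<union> J')" using finite_A finite_J J'J finite_subset by blast
  have finP: "finite ?P" using finite_permutations[OF finAJ] .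
  have PX: "w permutes X" if "w \<in> ?P" for w
    using that J'J by (auto simp: X_def intro: permutes_subset)
  define N0 where "N0 = card {w \<in> ?P. w ` A = A}"
  have N0pos: "N0 > 0"
  proof -
    have "id \<in> {w \<in> ?P. w ` A = A}" by (simp add: permutes_id)
    moreover have "finite {w \<in> ?P. w ` A = A}" using finP by simp
    ultimately show ?thesis unfolding N0_def using card_gt_0_iff by blast
  qed
  have cardD: "card {w \<in> ?P. w ` A = D} = N0" if D: "D \<in> ?img" for D
  proof -
    obtain w0 where w0: "w0 \<in> ?P" "D = w0 ` A" using D by blast
    have w0p: "w0 permutes (A \<union> J')" using w0(1) by simp
    have "bij_betw (\<lambda>w. w0 \<circ> w) {w \<in> ?P. w ` A = A} {w \<in> ?P. w ` A = D}"
    proof (rule bij_betw_byWitness[where f'="\<lambda>w. inv w0 \<circ> w"])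
      show "\<forall>a\<in>{w \<in> ?P. w ` A = A}. inv w0 \<circ> (w0 \<circ> a) = a"
        by (simp add: fun_eq_iff permutes_inverses[OF w0p])
      show "\<forall>a'\<in>{w \<in> ?P. w ` A = D}. w0 \<circ> (inv w0 \<circ> a') = a'"
        by (simp add: fun_eq_iff permutes_inverses[OF w0p])
      show "(\<lambda>w. w0 \<circ> w) ` {w \<in> ?P. w ` A = A} \<subseteq> {w \<in> ?P. w ` A = D}"
      proof
        fix u assume "u \<in> (\<lambda>w. w0 \<circ> w) ` {w \<in> ?P. w ` A = A}"
        then obtain w where w: "w permutes (A \<union> J')" "w ` A = A" and u: "u = w0 \<circ> w" by auto
        have "u ` A = w0 ` (w ` A)" using u by (simp add: image_comp)
        then have "u ` A = D" using w(2) w0(2) by simp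
        moreover have "u permutes (A \<union> J')" using u permutes_compose[OF w(1) w0p] by simp
        ultimately show "u \<in> {w \<in> ?P. w ` A = D}" by simp
      qed
      have "inv w0 ` D = A" using w0(2) by (simp add: image_comp comp_def permutes_inverses[OF w0p])
      then show "(\<lambda>w. inv w0 \<circ> w) ` {w \<in> ?P. w ` A = D} \<subseteq> {w \<in> ?P. w ` A = A}"
      proof -
        assume iD: "inv w0 ` D = A"
        show ?thesis
        proof
          fix u assume "u \<in> (\<lambda>w. inv w0 \<circ> w) ` {w \<in> ?P. w ` A = D}"
          then obtain w where w: "w permutes (A \<union> J')" "w ` A = D" and u: "u = inv w0 \<circ> w" by auto
          have "u ` A = inv w0 ` (w ` A)" using u by (simp add: image_comp)
          then have "u ` A = A" using w(2) iD by simp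
          moreover have "u permutes (A \<union> J')" using u permutes_compose[OF w(1) permutes_inv[OF w0p]] by simp
          ultimately show "u \<in> {w \<in> ?P. w ` A = A}" by simp
        qed
      qed
    qed
    then have "card {w \<in> ?P. w ` A = A} = card {w \<in> ?P. w ` A = D}" by (rule bij_betw_same_card)
    then show ?thesis unfolding N0_def by simp
  qed
  have "0 = (\<Sum>w\<in>?P. V (p \<circ> w))"
    using garnir_vanish[of J' p] J'J J_B2 ne by simp
  also have "\<dots> = (\<Sum>w\<in>?P. Phi p (w ` A))"
    by (rule sum.cong[OF refl]) (simp add: Phi_eq PX)
  also have "\<dots> = (\<Sum>D\<in>?img. \<Sum>w\<in>{w \<in> ?P. w ` A = D}. Phi p (w ` A))"
    by (rule sum.image_gen[OF finP])
  also have "\<dots> = (\<Sum>D\<in>?img. of_nat N0 * Phi p D)"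
  proof (rule sum.cong[OF refl])
    fix D assume D: "D \<in> ?img"
    have "(\<Sum>w\<in>{w \<in> ?P. w ` A = D}. Phi p (w ` A)) = (\<Sum>w\<in>{w \<in> ?P. w ` A = D}. Phi p D)"
      by (rule sum.cong) auto
    also have "\<dots> = of_nat N0 * Phi p D" using cardD[OF D] by simp
    finally show "(\<Sum>w\<in>{w \<in> ?P. w ` A = D}. Phi p (w ` A)) = of_nat N0 * Phi p D" .
  qed
  also have "\<dots> = of_nat N0 * sum (Phi p) ?img" by (simp add: sum_distrib_left)
  finally show ?thesis using N0pos by simp
qed

lemma img_char:
  assumes J'J: "J' \<subseteq> J"
  shows "(\<lambda>w. w ` A) ` {w. w permutes (A \<union> J')}
     = (\<lambda>(K, B). (A - B) \<union> K) ` (SIGMA K:Pow J'. {B. B \<subseteq> A \<and> card B = card K})"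
proof
  have disj: "A \<inter> J' = {}" using A_J'_disj[OF J'J] .
  have finJ': "finite J'" using finite_J J'J finite_subset by blast
  show "(\<lambda>w. w ` A) ` {w. w permutes (A \<union> J')}
     \<subseteq> (\<lambda>(K, B). (A - B) \<union> K) ` (SIGMA K:Pow J'. {B. B \<subseteq> A \<and> card B = card K})"
  proof
    fix D assume "D \<in> (\<lambda>w. w ` A) ` {w. w permutes (A \<union> J')}"
    then obtain w where w: "w permutes (A \<union> J')" and D: "D = w ` A" by blast
    have DAJ: "D \<subseteq> A \<union> J'" using D permutes_image[OF w] by blast
    define K where "K = D \<inter> J'"
    define B where "B = A - D"
    have Deq: "D = (A - B) \<union> K" using DAJ by (auto simp: K_def B_def)
    have "inj_on w A" using permutes_inj_on[OF w] by (rule inj_on_subset) blast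
    then have cD: "card D = card A" using D card_image by blast
    have c1: "card D = card (A \<inter> D) + card K"
    proof -
      have "D = (A \<inter> D) \<union> K" using DAJ by (auto simp: K_def)
      moreover have "(A \<inter> D) \<inter> K = {}" using disj by (auto simp: K_def)
      moreover have "card ((A \<inter> D) \<union> K) = card (A \<inter> D) + card K"
        by (rule card_Un_disjoint) (use finite_A finJ' \<open>(A \<inter> D) \<inter> K = {}\<close> in \<open>auto simp: K_def\<close>)
      ultimately show ?thesis by simp
    qed
    have c2: "card A = card (A \<inter> D) + card B"
    proof -
      have "A = (A \<inter> D) \<union> B" by (auto simp: B_def)
      moreover have "(A \<inter> D) \<inter> B = {}" by (auto simp: B_def)
      moreover have "card ((A \<inter> D) \<union> B) = card (A \<inter> D) + card B"
        by (rule card_Un_disjoint) (use finite_A \<open>(A \<inter> D) \<inter> B = {}\<close> in \<open>auto simp: B_def\<close>)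
      ultimately show ?thesis by simp
    qed
    have "card B = card K" using cD c1 c2 by simp
    moreover have "K \<in> Pow J'" "B \<subseteq> A" by (auto simp: K_def B_def)
    ultimately show "D \<in> (\<lambda>(K, B). (A - B) \<union> K) ` (SIGMA K:Pow J'. {B. B \<subseteq> A \<and> card B = card K})"
      using Deq by (intro image_eqI[of _ _ "(K, B)"]) auto
  qed
  show "(\<lambda>(K, B). (A - B) \<union> K) ` (SIGMA K:Pow J'. {B. B \<subseteq> A \<and> card B = card K})
     \<subseteq> (\<lambda>w. w ` A) ` {w. w permutes (A \<union> J')}"
  proof
    fix D assume "D \<in> (\<lambda>(K, B). (A - B) \<union> K) ` (SIGMA K:Pow J'. {B. B \<subseteq> A \<and> card B = card K})"
    then obtain K B where KB: "K \<subseteq> J'" "B \<subseteq> A" "card B = card K" and D: "D = (A - B) \<union> K"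
      by auto
    have finB: "finite B" using KB(2) finite_A finite_subset by blast
    have finK: "finite K" using KB(1) finJ' finite_subset by blast
    have BK: "B \<inter> K = {}" using KB disj by blast
    obtain w where w: "w permutes (B \<union> K)" "w ` B = K"
      using swap_exists[OF finB finK BK KB(3)] by blast
    have wP: "w permutes (A \<union> J')" using w(1) by (rule permutes_subset) (use KB in blast)
    have fix1: "w x = x" if "x \<in> A - B" for x
      using that BK KB disj by (intro permutes_not_in[OF w(1)]) blast
    have "A = (A - B) \<union> B" using KB(2) by blast
    then have "w ` A = w ` (A - B) \<union> w ` B" by (metis image_Un)
    also have "w ` (A - B) = A - B" using fix1 by (metis image_cong image_ident)
    finally have "w ` A = D" using D w(2) by simp
    then show "D \<in> (\<lambda>w. w ` A) ` {w. w permutes (A \<union> J')}" using wP by blast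
  qed
qed

lemma img_inj:
  assumes J'J: "J' \<subseteq> J"
  shows "inj_on (\<lambda>(K, B). (A - B) \<union> K) (SIGMA K:Pow J'. {B. B \<subseteq> A \<and> card B = card K})"
proof (rule inj_onI, clarify)
  have disj: "A \<inter> J' = {}" using A_J'_disj[OF J'J] .
  fix K B K' B'
  assume h: "K \<subseteq> J'" "B \<subseteq> A" "K' \<subseteq> J'" "B' \<subseteq> A" "A - B \<union> K = A - B' \<union> K'"
  have "K = (A - B \<union> K) \<inter> J'" using h(1) disj by blast
  also have "\<dots> = (A - B' \<union> K') \<inter> J'" using h(5) by simp
  also have "\<dots> = K'" using h(3) disj by blast
  finally have "K = K'" .
  have "B = A - ((A - B \<union> K) \<inter> A)" using h(1,2) disj by blast
  also have "\<dots> = A - ((A - B' \<union> K') \<inter> A)" using h(5) by simp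
  also have "\<dots> = B'" using h(3,4) disj by blast
  finally show "K = K' \<and> B = B'" using \<open>K = K'\<close> by simp
qed

definition "Fp p K = (\<Sum>B\<in>{B. B \<subseteq> A \<and> card B = card K}. Phi p ((A - B) \<union> K))"

lemma Fp_vanish:
  assumes J'J: "J' \<subseteq> J" and ne: "J' \<noteq> {}"
  shows "(\<Sum>K\<in>Pow J'. Fp p K) = 0"
proof -
  have finJ': "finite J'" using finite_J J'J finite_subset by blast
  have finB: "finite {B. B \<subseteq> A \<and> card B = card K}" for K
    using finite_A by (rule finite_subset[rotated, OF finite_Pow_iff[THEN iffD2]]) auto
  have "(\<Sum>K\<in>Pow J'. Fp p K)
      = (\<Sum>(K, B)\<in>(SIGMA K:Pow J'. {B. B \<subseteq> A \<and> card B = card K}). Phi p ((A - B) \<union> K))"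
    unfolding Fp_def by (rule sum.Sigma) (use finJ' finB in auto)
  also have "\<dots> = sum (Phi p) ((\<lambda>(K, B). (A - B) \<union> K) ` (SIGMA K:Pow J'. {B. B \<subseteq> A \<and> card B = card K}))"
    using sum.reindex[OF img_inj[OF J'J], of "Phi p"] by (simp add: case_prod_beta comp_def)
  also have "\<dots> = 0" using group_vanish[OF J'J ne] img_char[OF J'J] by simp
  finally show ?thesis .
qed

lemma V_Fp: "V p = (-1) ^ j * Fp p J"
proof -
  have "Fp p J = (-1) ^ card J * Fp p {}"
    by (rule incl_excl[OF finite_J]) (rule Fp_vanish)
  moreover have "Fp p {} = V p"
  proof -
    have "{B. B \<subseteq> A \<and> card B = card ({}::nat set)} = {{}}"
      using finite_A by (auto dest: finite_subset)
    then have "Fp p {} = Phi p A" by (simp add: Fp_def)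
    also have "\<dots> = Phi p (id ` A)" by simp
    also have "\<dots> = V (p \<circ> id)" by (rule Phi_eq) (simp add: permutes_id)
    finally show ?thesis by simp
  qed
  ultimately show ?thesis using card_J by simp
qed

end




context garnir begin

definition "Ri = {i} \<times> {1..lam ! (i - 1)}"
definition "R2 = {Suc i} \<times> {1..j}"
definition "CC = {C. C \<subseteq> {1..lam ! (i - 1)} \<and> card C = j}"
definition "rk C c = Suc (length (filter (\<lambda>d. d < c) (sorted_list_of_set C)))"
definition "th C = (\<lambda>(r, c). if r = i \<and> c \<in> C then (Suc i, rk C c)
   else if r = Suc i \<and> 1 \<le> c \<and> c \<le> j then (i, sorted_list_of_set C ! (c - 1)) else (r, c))"

lemma swap_eq: "swap_numbering i j C S = S \<circ> th C"
proof (rule ext)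
  fix x :: "nat \<times> nat"
  obtain r c where x: "x = (r, c)" by (cases x)
  show "swap_numbering i j C S x = (S \<circ> th C) x"
    unfolding x swap_numbering_def th_def rk_def Suc_eq_plus1 by simp
qed

lemma Ri_cells: "Ri \<subseteq> cells lam" using i1 i2 by (auto simp: Ri_def cells_def)
lemma R2_cells: "R2 \<subseteq> cells lam" using J_cells by (simp add: R2_def)

lemma A_eq: "A = S ` Ri"
proof
  show "A \<subseteq> S ` Ri"
  proof
    fix k assume k: "k \<in> A"
    then have kN: "k \<in> {1..n}" and r: "fst (Si k) = i" by (auto simp: A_def rowE_def)
    have "Si k \<in> cells lam" using Si_in[OF kN] .
    then have "Si k \<in> Ri" using r by (auto simp: Ri_def cells_def)
    then show "k \<in> S ` Ri" using S_Si[OF kN] by (metis imageI)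
  qed
  show "S ` Ri \<subseteq> A"
  proof
    fix k assume "k \<in> S ` Ri"
    then obtain x where x: "x \<in> Ri" "k = S x" by blast
    have xc: "x \<in> cells lam" using x(1) Ri_cells by blast
    show "k \<in> A" using S_in[OF xc] Si_S[OF xc] x by (auto simp: A_def rowE_def Ri_def)
  qed
qed

lemma J_eq: "J = S ` R2" by (simp add: J_def R2_def)

context
  fixes C assumes C: "C \<in> CC"
begin

lemma finC: "finite C" using C by (auto simp: CC_def intro: finite_subset)
lemma cardC: "card C = j" using C by (simp add: CC_def)
lemma CRi: "{i} \<times> C \<subseteq> Ri" using C by (auto simp: CC_def Ri_def)

lemma rk_card: "rk C c = Suc (card {d \<in> C. d < c})"
proof -
  have "length (filter (\<lambda>d. d < c) (sorted_list_of_set C)) = card ({d. d < c} \<inter> set (sorted_list_of_set C))"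
    by (rule distinct_length_filter) simp
  also have "{d. d < c} \<inter> set (sorted_list_of_set C) = {d \<in> C. d < c}" using finC by auto
  finally show ?thesis by (simp add: rk_def)
qed

lemma rk_range: assumes c: "c \<in> C" shows "1 \<le> rk C c \<and> rk C c \<le> j"
proof -
  have "{d \<in> C. d < c} \<subset> C" using c by auto
  then have "card {d \<in> C. d < c} < card C" by (rule psubset_card_mono[OF finC])
  then show ?thesis using cardC rk_card by simp
qed

lemma rk_inj: "inj_on (rk C) C"
proof -
  have lt: "rk C c < rk C c'" if "c \<in> C" "c' \<in> C" "c < c'" for c c'
  proof -
    have "{d \<in> C. d < c} \<subset> {d \<in> C. d < c'}" using that by auto
    moreover have "finite {d \<in> C. d < c'}" using finC by simp
    ultimately have "card {d \<in> C. d < c} < card {d \<in> C. d < c'}" by (rule psubset_card_mono[rotated])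
    then show ?thesis using rk_card by simp
  qed
  show ?thesis
  proof (rule inj_onI)
    fix c c' assume "c \<in> C" "c' \<in> C" "rk C c = rk C c'"
    then show "c = c'" using lt by (metis less_irrefl linorder_neqE_nat)
  qed
qed

lemma len_Cl: "length (sorted_list_of_set C) = j" using cardC by simp

lemma nth_in: assumes "1 \<le> c" "c \<le> j" shows "sorted_list_of_set C ! (c - 1) \<in> C"
proof -
  have "c - 1 < length (sorted_list_of_set C)" using assms len_Cl by simp
  then have "sorted_list_of_set C ! (c - 1) \<in> set (sorted_list_of_set C)" by (rule nth_mem)
  then show ?thesis using finC by simp
qed

lemma nth_inj: assumes "1 \<le> c" "c \<le> j" "1 \<le> c'" "c' \<le> j"
  and "sorted_list_of_set C ! (c - 1) = sorted_list_of_set C ! (c' - 1)"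
  shows "c = c'"
proof -
  have "c - 1 = c' - 1"
    using assms len_Cl nth_eq_iff_index_eq[of "sorted_list_of_set C" "c - 1" "c' - 1"] by simp
  then show ?thesis using assms by simp
qed

lemma th_cells: assumes x: "x \<in> cells lam" shows "th C x \<in> cells lam"
proof -
  obtain r c where rc: "x = (r, c)" by (cases x)
  show ?thesis
  proof (cases "r = i \<and> c \<in> C")
    case True
    then have "th C x = (Suc i, rk C c)" by (simp add: th_def rc)
    moreover have "(Suc i, rk C c) \<in> R2" using rk_range True by (simp add: R2_def)
    ultimately show ?thesis using R2_cells by auto
  next
    case False
    show ?thesis
    proof (cases "r = Suc i \<and> 1 \<le> c \<and> c \<le> j")
      case True
      then have "th C x = (i, sorted_list_of_set C ! (c - 1))" using False by (simp add: th_def rc)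
      moreover have "(i, sorted_list_of_set C ! (c - 1)) \<in> Ri" using nth_in True CRi by blast
      ultimately show ?thesis using Ri_cells by auto
    next
      case False2: False
      then have "th C x = x" using False by (simp add: th_def rc)
      then show ?thesis using x by simp
    qed
  qed
qed

lemma th_1: "c \<in> C \<Longrightarrow> th C (i, c) = (Suc i, rk C c)" by (simp add: th_def)
lemma th_2: "1 \<le> c \<Longrightarrow> c \<le> j \<Longrightarrow> th C (Suc i, c) = (i, sorted_list_of_set C ! (c - 1))"
  by (simp add: th_def)
lemma th_3: "x \<notin> {i} \<times> C \<Longrightarrow> x \<notin> R2 \<Longrightarrow> th C x = x"
  by (cases x) (auto simp: th_def R2_def)

lemma th_R1: assumes "x \<in> {i} \<times> C" shows "th C x \<in> R2"
proof -
  obtain c where c: "x = (i, c)" "c \<in> C" using assms by blast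
  have "th C x = (Suc i, rk C c)" using c th_1 by simp
  moreover have "1 \<le> rk C c" "rk C c \<le> j" using rk_range[OF c(2)] by auto
  ultimately show ?thesis by (simp add: R2_def)
qed

lemma th_R2: assumes "x \<in> R2" shows "th C x \<in> {i} \<times> C"
proof -
  obtain c where c: "x = (Suc i, c)" "1 \<le> c" "c \<le> j" using assms by (auto simp: R2_def)
  have "th C x = (i, sorted_list_of_set C ! (c - 1))" using c th_2 by simp
  moreover have "sorted_list_of_set C ! (c - 1) \<in> C" using nth_in c(2,3) by blast
  ultimately show ?thesis by simp
qed

lemma R_disj: "z \<in> {i} \<times> C \<Longrightarrow> z \<notin> R2" by (auto simp: R2_def)

lemma th_R1_iff: "(th C x \<in> R2) = (x \<in> {i} \<times> C)"
proof
  assume h: "th C x \<in> R2"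
  show "x \<in> {i} \<times> C"
  proof (rule ccontr)
    assume n: "x \<notin> {i} \<times> C"
    show False
    proof (cases "x \<in> R2")
      case True then show False using R_disj[OF th_R2[OF True]] h by simp
    next
      case False
      have "th C x = x" by (rule th_3[OF n False])
      then show False using h False by simp
    qed
  qed
qed (rule th_R1)

lemma th_R2_iff: "(th C x \<in> {i} \<times> C) = (x \<in> R2)"
proof
  assume h: "th C x \<in> {i} \<times> C"
  show "x \<in> R2"
  proof (rule ccontr)
    assume n: "x \<notin> R2"
    show False
    proof (cases "x \<in> {i} \<times> C")
      case True then show False using R_disj[OF h] th_R1[OF True] by simp
    next
      case False
      have "th C x = x" by (rule th_3[OF False n])
      then show False using h False by simp
    qed
  qed
qed (rule th_R2)

lemma th_inj: "inj_on (th C) (cells lam)"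
proof (rule inj_onI)
  fix x y assume e: "th C x = th C y"
  show "x = y"
  proof (cases "x \<in> {i} \<times> C")
    case True
    then have y: "y \<in> {i} \<times> C" using th_R1_iff e by metis
    obtain c where c: "x = (i, c)" "c \<in> C" using True by blast
    obtain c' where c': "y = (i, c')" "c' \<in> C" using y by blast
    have "(Suc i, rk C c) = (Suc i, rk C c')" using e c c' th_1 by simp
    then have "rk C c = rk C c'" by simp
    then have "c = c'" using inj_onD[OF rk_inj _ c(2) c'(2)] by simp
    then show ?thesis using c c' by simp
  next
    case nx1: False
    show ?thesis
    proof (cases "x \<in> R2")
      case True
      then have y: "y \<in> R2" using th_R2_iff e by metis
      obtain c where c: "x = (Suc i, c)" "1 \<le> c" "c \<le> j" using True by (auto simp: R2_def)
      obtain c' where c': "y = (Suc i, c')" "1 \<le> c'" "c' \<le> j" using y by (auto simp: R2_def)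
      have "sorted_list_of_set C ! (c - 1) = sorted_list_of_set C ! (c' - 1)"
        using e c c' th_2 by simp
      then have "c = c'" using nth_inj c(2,3) c'(2,3) by blast
      then show ?thesis using c c' by simp
    next
      case nx2: False
      have y1: "y \<notin> {i} \<times> C" using th_R1_iff e nx1 by metis
      have y2: "y \<notin> R2" using th_R2_iff e nx2 by metis
      show ?thesis using e th_3[OF nx1 nx2] th_3[OF y1 y2] by simp
    qed
  qed
qed

lemma th_image: "th C ` cells lam = cells lam"
  by (rule endo_inj_surj[OF finite_cells _ th_inj]) (use th_cells in blast)

definition "tau = (\<lambda>k. if k \<in> {1..n} then S (th C (Si k)) else k)"

lemma tau_perm: "tau permutes {1..n}"
proof -
  have b1: "bij_betw Si {1..n} (cells lam)" unfolding Si_def by (rule bij_betw_the_inv_into[OF bij])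
  have b2: "bij_betw (th C) (cells lam) (cells lam)" using th_inj th_image by (simp add: bij_betw_def)
  have "bij_betw (S \<circ> th C \<circ> Si) {1..n} {1..n}"
    using bij_betw_trans[OF bij_betw_trans[OF b1 b2] bij] by (simp add: comp_assoc)
  then have "bij_betw tau {1..n} {1..n}"
    by (rule bij_betw_cong[THEN iffD1, rotated]) (simp add: tau_def)
  then show ?thesis by (rule bij_imp_permutes) (auto simp: tau_def)
qed

lemma tau_S: "x \<in> cells lam \<Longrightarrow> tau (S x) = S (th C x)"
  using S_in by (simp add: tau_def)

lemma th_fix: assumes "x \<notin> {i} \<times> C" "x \<notin> R2" shows "th C x = x"
  using assms by (cases x) (auto simp: th_def R2_def)

lemma tau_X: "tau permutes X"
proof (rule permutes_superset[OF tau_perm])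
  fix k assume k: "k \<in> {1..n} - X"
  have kN: "k \<in> {1..n}" using k by (rule DiffD1)
  have kX: "k \<notin> X" using k by blast
  have kA: "k \<notin> A" using kX X_def by blast
  have kJ: "k \<notin> J" using kX X_def by blast
  have n1: "Si k \<notin> {i} \<times> C"
  proof
    assume "Si k \<in> {i} \<times> C"
    then have "Si k \<in> Ri" by (rule subsetD[OF CRi])
    then have "S (Si k) \<in> S ` Ri" by (rule imageI)
    then have "S (Si k) \<in> A" unfolding A_eq .
    then show False using kA S_Si[OF kN] by simp
  qed
  have n2: "Si k \<notin> R2"
  proof
    assume "Si k \<in> R2"
    then have "S (Si k) \<in> S ` R2" by (rule imageI)
    then have "S (Si k) \<in> J" unfolding J_eq .
    then show False using kJ S_Si[OF kN] by simp
  qed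
  have "th C (Si k) = Si k" by (rule th_fix[OF n1 n2])
  then show "tau k = k" using kN S_Si[OF kN] by (simp add: tau_def)
qed

lemma th_Ri: "th C ` Ri = (Ri - {i} \<times> C) \<union> R2"
proof -
  have "Ri = (Ri - {i} \<times> C) \<union> ({i} \<times> C)" using CRi by blast
  then have "th C ` Ri = th C ` (Ri - {i} \<times> C) \<union> th C ` ({i} \<times> C)" by (metis image_Un)
  also have "th C ` (Ri - {i} \<times> C) = Ri - {i} \<times> C"
  proof -
    have "th C x = x" if "x \<in> Ri - {i} \<times> C" for x
      using that by (intro th_fix) (auto simp: Ri_def R2_def)
    then show ?thesis by (metis image_cong image_ident)
  qed
  also have "th C ` ({i} \<times> C) = R2"
  proof (rule card_subset_eq)
    show "finite R2" by (simp add: R2_def)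
    show "th C ` ({i} \<times> C) \<subseteq> R2" using rk_range by (auto simp: th_def R2_def)
    have "inj_on (th C) ({i} \<times> C)" using th_inj CRi Ri_cells inj_on_subset by blast
    then have "card (th C ` ({i} \<times> C)) = card ({i} \<times> C)" by (rule card_image)
    also have "\<dots> = j" using cardC by (simp add: card_cartesian_product)
    also have "\<dots> = card R2" by (simp add: R2_def card_cartesian_product)
    finally show "card (th C ` ({i} \<times> C)) = card R2" .
  qed
  finally show ?thesis .
qed

lemma tau_A: "tau ` A = (A - S ` ({i} \<times> C)) \<union> J"
proof -
  have "tau ` A = tau ` (S ` Ri)" using A_eq by simp
  also have "\<dots> = (\<lambda>x. tau (S x)) ` Ri" by (simp add: image_image)
  also have "\<dots> = (\<lambda>x. S (th C x)) ` Ri" using tau_S Ri_cells by (intro image_cong) auto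
  also have "\<dots> = S ` (th C ` Ri)" by (simp add: image_image)
  also have "\<dots> = S ` (Ri - {i} \<times> C) \<union> S ` R2" using th_Ri by (simp add: image_Un)
  also have "S ` (Ri - {i} \<times> C) = S ` Ri - S ` ({i} \<times> C)"
    by (rule inj_on_image_set_diff[OF S_inj]) (use Ri_cells CRi in blast)+
  finally show ?thesis using A_eq J_eq by simp
qed

lemma v_swap: "v_elt n lam (swap_numbering i j C S) T p = Phi p ((A - S ` ({i} \<times> C)) \<union> J)"
proof -
  have "v_elt n lam (swap_numbering i j C S) T p = v_elt n lam S T (p \<circ> tau)"
    by (rule v_conj[OF numb_axioms T tau_perm]) (simp add: swap_eq tau_S)
  also have "\<dots> = Phi p (tau ` A)" using Phi_eq[OF tau_X] V_def by simp
  finally show ?thesis using tau_A by simp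
qed

end

end




context garnir begin

lemma Xi_eq: "Xi lam i j S = (\<lambda>C. swap_numbering i j C S) ` CC"
  by (simp add: Xi_def CC_def)

lemma swap_inj: "inj_on (\<lambda>C. swap_numbering i j C S) CC"
proof -
  have sub: "C \<subseteq> C'" if C: "C \<in> CC" and C': "C' \<in> CC"
    and e: "swap_numbering i j C S = swap_numbering i j C' S" for C C'
  proof
    fix c assume c: "c \<in> C"
    show "c \<in> C'"
    proof (rule ccontr)
      assume nc: "c \<notin> C'"
      have "swap_numbering i j C S (i, c) = S (Suc i, rk C c)"
        using swap_eq[of C] th_1[OF C c] by simp
      moreover have "swap_numbering i j C' S (i, c) = S (i, c)"
        using swap_eq[of C'] nc by (simp add: th_def)
      ultimately have eq: "S (Suc i, rk C c) = S (i, c)" using e by simp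
      have c1: "(Suc i, rk C c) \<in> cells lam" using rk_range[OF C c] R2_cells by (auto simp: R2_def)
      have c2: "(i, c) \<in> cells lam" using CRi[OF C] Ri_cells c by blast
      have "(Suc i, rk C c) = (i, c)" using inj_onD[OF S_inj eq c1 c2] .
      then show False by simp
    qed
  qed
  show ?thesis
    by (rule inj_onI) (metis sub subset_antisym)
qed

lemma B_inj: "inj_on (\<lambda>C. S ` ({i} \<times> C)) CC"
proof (rule inj_onI)
  fix C C' assume C: "C \<in> CC" and C': "C' \<in> CC" and e: "S ` ({i} \<times> C) = S ` ({i} \<times> C')"
  have "{i} \<times> C = {i} \<times> C'"
    using inj_on_image_eq_iff[OF S_inj, of "{i} \<times> C" "{i} \<times> C'"] e CRi[OF C] CRi[OF C'] Ri_cells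
    by blast
  then show "C = C'" by blast
qed

lemma B_img: "(\<lambda>C. S ` ({i} \<times> C)) ` CC = {B. B \<subseteq> A \<and> card B = card J}"
proof
  show "(\<lambda>C. S ` ({i} \<times> C)) ` CC \<subseteq> {B. B \<subseteq> A \<and> card B = card J}"
  proof
    fix B assume "B \<in> (\<lambda>C. S ` ({i} \<times> C)) ` CC"
    then obtain C where C: "C \<in> CC" and B: "B = S ` ({i} \<times> C)" by blast
    have "B \<subseteq> A" using B CRi[OF C] A_eq by blast
    moreover have "card B = card ({i} \<times> C)"
      unfolding B by (rule card_image[OF inj_on_subset[OF S_inj]]) (use CRi[OF C] Ri_cells in blast)
    moreover have "card ({i} \<times> C) = j" using cardC[OF C] by (simp add: card_cartesian_product)
    ultimately show "B \<in> {B. B \<subseteq> A \<and> card B = card J}" using card_J by simp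
  qed
  show "{B. B \<subseteq> A \<and> card B = card J} \<subseteq> (\<lambda>C. S ` ({i} \<times> C)) ` CC"
  proof
    fix B assume "B \<in> {B. B \<subseteq> A \<and> card B = card J}"
    then have BA: "B \<subseteq> A" and cB: "card B = j" using card_J by auto
    define C where "C = {c \<in> {1..lam ! (i - 1)}. S (i, c) \<in> B}"
    have BS: "B = S ` ({i} \<times> C)"
    proof
      show "B \<subseteq> S ` ({i} \<times> C)"
      proof
        fix b assume b: "b \<in> B"
        then have "b \<in> S ` Ri" using BA A_eq by blast
        then obtain c where c: "c \<in> {1..lam ! (i - 1)}" "b = S (i, c)" by (auto simp: Ri_def)
        then have "c \<in> C" using b by (simp add: C_def)
        then show "b \<in> S ` ({i} \<times> C)" using c by blast
      qed
      show "S ` ({i} \<times> C) \<subseteq> B" by (auto simp: C_def)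
    qed
    have CR: "{i} \<times> C \<subseteq> Ri" by (auto simp: C_def Ri_def)
    have "card B = card ({i} \<times> C)"
      unfolding BS by (rule card_image[OF inj_on_subset[OF S_inj]]) (use CR Ri_cells in blast)
    then have "card C = j" using cB by (simp add: card_cartesian_product)
    then have "C \<in> CC" by (auto simp: CC_def C_def)
    then show "B \<in> (\<lambda>C. S ` ({i} \<times> C)) ` CC" using BS by blast
  qed
qed

lemma final_sum: "(\<Sum>U\<in>Xi lam i j S. v_elt n lam U T p) = Fp p J"
proof -
  have "(\<Sum>U\<in>Xi lam i j S. v_elt n lam U T p) = (\<Sum>C\<in>CC. v_elt n lam (swap_numbering i j C S) T p)"
    unfolding Xi_eq by (rule sum.reindex[OF swap_inj, unfolded comp_def])
  also have "\<dots> = (\<Sum>C\<in>CC. Phi p ((A - S ` ({i} \<times> C)) \<union> J))"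
    by (rule sum.cong[OF refl]) (rule v_swap)
  also have "\<dots> = (\<Sum>B\<in>(\<lambda>C. S ` ({i} \<times> C)) ` CC. Phi p ((A - B) \<union> J))"
    by (rule sum.reindex[OF B_inj, unfolded comp_def, symmetric])
  also have "\<dots> = Fp p J" unfolding B_img Fp_def ..
  finally show ?thesis .
qed

end

theorem corollary2p16:
  fixes n :: nat and lam :: "nat list" and S T :: numbering and i j :: nat
  assumes "is_partition lam n"
    and "is_numbering n lam S" and "is_numbering n lam T"
    and "1 \<le> i" and "i \<le> length lam - 1"
    and "1 \<le> j" and "j \<le> lam ! i"
  shows "v_elt n lam S T = (\<lambda>p. (-1) ^ j * (\<Sum>U\<in>Xi lam i j S. v_elt n lam U T p))"
proof -
  interpret garnir n lam S T i j
    using assms by (unfold_locales) (auto simp: is_numbering_def)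
  show ?thesis
  proof (rule ext)
    fix p
    have "v_elt n lam S T p = V p" by (simp add: V_def)
    also have "\<dots> = (-1) ^ j * Fp p J" by (rule V_Fp)
    also have "\<dots> = (-1) ^ j * (\<Sum>U\<in>Xi lam i j S. v_elt n lam U T p)" by (simp add: final_sum)
    finally show "v_elt n lam S T p = (-1) ^ j * (\<Sum>U\<in>Xi lam i j S. v_elt n lam U T p)" .
  qed
qed


end
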